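(* Let $(X_t)_{t\in\mathbb{Z}}$ be the second-order stationary process satisfying $a(L)(1-L)^{d_0}X_t=b(L)\epsilon_t$. Then almost surely $$\lim_{t\to\infty}\sup_{\theta\in\Theta_\kappa}|\epsilon_t(\theta)-\tilde\epsilon_t(\theta)|=0.$$
   Context: Model: $L$ is the backshift operator, $d_0\in(0,1/2)$, $(\epsilon_t)_{t\in\mathbb Z}$ is a sequence of uncorrelated random variables with mean $0$ and common variance $\sigma_\epsilon^2>0$, $a(L)=1-\sum_{i=1}^p a_iL^i$, $b(L)=1-\sum_{i=1}^q b_iL^i$ have all roots outside the closed unit disk and no common root; $(1-L)^{d}=\sum_{j\ge0}\alpha_j(d)L^j$ with $\alpha_j(d)=\Gamma(j-d)/\{\Gamma(j+1)\Gamma(-d)\}$. For $\theta=(\theta_1,\dots,\theta_{p+q},d)$: $a_\theta(z)=1-\sum_{i=1}^p\theta_iz^i$, $b_\theta(z)=1-\sum_{j=1}^q\theta_{p+j}z^j$. For $\kappa>0$, $\Theta^*_\kappa$ is the set of $(\theta_1,\dots,\theta_{p+q})$ such that all roots of $a_\theta,b_\theta$ have modulus $\ge1+\kappa$; $\Theta_\kappa=\Theta^*_\kappa\times[d_1,d_2]$ with $[d_1,d_2]\subset(0,1/2)$. $\epsilon_t(\theta)=\sum_{i\ge0}\gamma_i(\theta)X_{t-i}$ where $(\gamma_i(\theta))_{i\ge0}$ are the power-series coefficients of $b_\theta^{-1}(z)a_\theta(z)(1-z)^d$; the truncated version is $\tilde\epsilon_t(\theta)=\sum_{i=0}^{t-1}\gamma_i(\theta)X_{t-i}$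 for $t\ge1$. *)

theory Defs
  imports "HOL-Probability.Probability" "HOL-Computational_Algebra.Formal_Power_Series"
begin

text \<open>Coefficients of the fractional difference operator (1-L)^d = sum_j alpha_j(d) L^j.\<close>
definition frac_coef :: "real \<Rightarrow> nat \<Rightarrow> real" where
  "frac_coef d j = Gamma (real j - d) / (Gamma (real j + 1) * Gamma (- d))"

text \<open>A parameter theta = (theta_1,...,theta_{p+q}, d) is represented as a pair (th, d)
  where th is the list [theta_1, ..., theta_{p+q}] (so theta_i = th ! (i-1)).\<close>

definition a_theta :: "nat \<Rightarrow> real list \<Rightarrow> complex \<Rightarrow> complex" where
  "a_theta p th z = 1 - (\<Sum>i=1..p. complex_of_real (th ! (i - 1)) * z ^ i)"

definition b_theta :: "nat \<Rightarrow> nat \<Rightarrow> real list \<Rightarrow> complex \<Rightarrow> complex" where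
  "b_theta p q th z = 1 - (\<Sum>j=1..q. complex_of_real (th ! (p + j - 1)) * z ^ j)"

definition Theta_star :: "nat \<Rightarrow> nat \<Rightarrow> real \<Rightarrow> real list set" where
  "Theta_star p q \<kappa> = {th. length th = p + q \<and>
      (\<forall>z. a_theta p th z = 0 \<longrightarrow> norm z \<ge> 1 + \<kappa>) \<and>
      (\<forall>z. b_theta p q th z = 0 \<longrightarrow> norm z \<ge> 1 + \<kappa>)}"

definition Theta_kappa :: "nat \<Rightarrow> nat \<Rightarrow> real \<Rightarrow> real \<Rightarrow> real \<Rightarrow> (real list \<times> real) set" where
  "Theta_kappa p q \<kappa> d1 d2 = Theta_star p q \<kappa> \<times> {d1..d2}"

definition a_theta_fps :: "nat \<Rightarrow> real list \<Rightarrow> real fps" where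
  "a_theta_fps p th = Abs_fps (\<lambda>i. if i = 0 then 1 else if i \<le> p then - (th ! (i - 1)) else 0)"

definition b_theta_fps :: "nat \<Rightarrow> nat \<Rightarrow> real list \<Rightarrow> real fps" where
  "b_theta_fps p q th = Abs_fps (\<lambda>j. if j = 0 then 1 else if j \<le> q then - (th ! (p + j - 1)) else 0)"

definition frac_fps :: "real \<Rightarrow> real fps" where
  "frac_fps d = Abs_fps (frac_coef d)"

definition gamma_coef :: "nat \<Rightarrow> nat \<Rightarrow> real list \<times> real \<Rightarrow> nat \<Rightarrow> real" where
  "gamma_coef p q \<theta> i =
     fps_nth (inverse (b_theta_fps p q (fst \<theta>)) * a_theta_fps p (fst \<theta>) * frac_fps (snd \<theta>)) i"

definition eps_theta :: "nat \<Rightarrow> nat \<Rightarrow> (int \<Rightarrow> 'w \<Rightarrow> real) \<Rightarrow> int \<Rightarrow> real list \<times> real \<Rightarrow> 'w \<Rightarrow> real" where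
  "eps_theta p q X t \<theta> \<omega> = (\<Sum>i. gamma_coef p q \<theta> i * X (t - int i) \<omega>)"

definition eps_tilde :: "nat \<Rightarrow> nat \<Rightarrow> (int \<Rightarrow> 'w \<Rightarrow> real) \<Rightarrow> nat \<Rightarrow> real list \<times> real \<Rightarrow> 'w \<Rightarrow> real" where
  "eps_tilde p q X t \<theta> \<omega> = (\<Sum>i<t. gamma_coef p q \<theta> i * X (int t - int i) \<omega>)"

end

theory Submission
  imports Defs "HOL-Computational_Algebra.Fundamental_Theorem_Algebra"
begin

lemma not_int_aux: "0 < d \<Longrightarrow> d < 1 \<Longrightarrow> d = real_of_int n \<or> - d = real_of_int n \<Longrightarrow> False"
proof -
  assume a: "0 < d" "d < 1" "d = real_of_int n \<or> - d = real_of_int n"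
  show False
  proof (cases "d = real_of_int n")
    case True
    hence "(of_int 0::real) < of_int n" "(of_int n::real) < of_int 1" using a by auto
    hence "0 < n" "n < 1" by (simp_all only: of_int_less_iff)
    thus False by linarith
  next
    case False
    hence "(of_int (-1)::real) < of_int n" "(of_int n::real) < of_int 0" using a by auto
    hence "-1 < n" "n < 0" by (simp_all only: of_int_less_iff)
    thus False by linarith
  qed
qed

lemma frac_coef_0: "0 < d \<Longrightarrow> d < 1 \<Longrightarrow> frac_coef d 0 = 1"
proof -
  assume "0 < d" "d < 1"
  hence "- d \<notin> \<int>\<^sub>\<le>\<^sub>0" using not_int_aux by (auto elim!: nonpos_Ints_cases)
  hence "Gamma (-d) \<noteq> 0" by (simp add: Gamma_nonzero)
  thus ?thesis by (simp add: frac_coef_def)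
qed

lemma frac_coef_Suc:
  assumes "0 < d" "d < 1"
  shows "frac_coef d (Suc j) = frac_coef d j * (real j - d) / (real j + 1)"
proof -
  have ni: "real j - d \<notin> \<int>\<^sub>\<le>\<^sub>0"
  proof
    assume "real j - d \<in> \<int>\<^sub>\<le>\<^sub>0"
    then obtain k where k: "real j - d = of_int k" by (auto elim!: nonpos_Ints_cases)
    hence "d = of_int (int j - k)" by simp
    with assms show False using not_int_aux by blast
  qed
  have g1: "Gamma (real (Suc j) - d) = (real j - d) * Gamma (real j - d)"
    using Gamma_plus1[OF ni] by (simp add: algebra_simps)
  have g2: "Gamma (real (Suc j) + 1) = (real j + 1) * Gamma (real j + 1)"
  proof -
    have "real j + 1 \<notin> \<int>\<^sub>\<le>\<^sub>0" using nonpos_Ints_nonpos by force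
    from Gamma_plus1[OF this] show ?thesis by (simp add: algebra_simps)
  qed
  show ?thesis unfolding frac_coef_def g1 g2 by (simp add: field_simps)
qed

lemma powr_mult_aux:
  fixes x s :: real
  assumes "0 \<le> x" "s * x \<le> 1" "0 \<le> s"
  shows "(1 + x) powr s * (1 - s * x) \<le> 1"
proof -
  have "(1 + x) powr s = exp (s * ln (1 + x))" using assms by (simp add: powr_def)
  also have "\<dots> \<le> exp (s * x)"
    using ln_add_one_self_le_self[OF assms(1)] assms(3) by (simp add: mult_left_mono)
  finally have a: "(1 + x) powr s \<le> exp (s * x)" .
  have b: "1 - s * x \<le> exp (- (s * x))" using exp_ge_add_one_self[of "-(s*x)"] by simp
  have "(1 + x) powr s * (1 - s * x) \<le> exp (s * x) * exp (- (s * x))"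
    using assms a b by (intro mult_mono) auto
  also have "\<dots> = 1" by (simp add: exp_minus)
  finally show ?thesis .
qed

lemma frac_coef_bound:
  assumes d: "0 < d1" "d1 \<le> d" "d < 1/2"
  shows "\<bar>frac_coef d j\<bar> \<le> 4 * (real j + 1) powr (-(1 + d1))"
proof -
  define s where "s = 1 + d1"
  have s: "1 < s" "s \<le> 1 + d" "s < 2" using d by (auto simp: s_def)
  have d01: "0 < d" "d < 1" using d by auto
  have main: "(real j + 1) powr s * \<bar>frac_coef d j\<bar> \<le> 4" if "j \<ge> 1" for j
    using that
  proof (induction j rule: dec_induct)
    case base
    have "frac_coef d 1 = - d" using frac_coef_Suc[OF d01, of 0] frac_coef_0[OF d01] by simp
    moreover have "(2::real) powr s \<le> 2 powr 2" using s by (intro powr_mono) auto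
    ultimately have "(real 1 + 1) powr s * \<bar>frac_coef d 1\<bar> \<le> 4 * d"
      using d01 by (simp add: mult_right_mono)
    thus ?case using d by simp
  next
    case (step j)
    define x where "x = 1 / (real j + 1)"
    have x: "0 \<le> x" "s * x \<le> 1" "0 \<le> s" using step(1) s by (auto simp: x_def field_simps)
    have jd: "real j - d > 0" using step(1) d by simp
    have eq1: "(real (Suc j) + 1) powr s = (real j + 1) powr s * (1 + x) powr s"
    proof -
      have "real (Suc j) + 1 = (real j + 1) * (1 + x)" by (simp add: x_def field_simps)
      thus ?thesis by (simp add: powr_mult)
    qed
    have eq2: "\<bar>frac_coef d (Suc j)\<bar> = \<bar>frac_coef d j\<bar> * ((real j - d) / (real j + 1))"
      using jd by (simp add: frac_coef_Suc[OF d01] abs_mult)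
    have le: "(real j - d) / (real j + 1) \<le> 1 - s * x"
    proof -
      have "s * (real j + 1) \<le> (1 + d) * (real j + 1)" using s by (intro mult_right_mono) auto
      thus ?thesis by (simp add: x_def field_simps)
    qed
    have "(real (Suc j) + 1) powr s * \<bar>frac_coef d (Suc j)\<bar>
        = ((real j + 1) powr s * \<bar>frac_coef d j\<bar>) * ((1 + x) powr s * ((real j - d) / (real j + 1)))"
      unfolding eq1 eq2 by (simp add: algebra_simps)
    also have "\<dots> \<le> ((real j + 1) powr s * \<bar>frac_coef d j\<bar>) * ((1 + x) powr s * (1 - s * x))"
      using le by (intro mult_left_mono) auto
    also have "\<dots> \<le> ((real j + 1) powr s * \<bar>frac_coef d j\<bar>) * 1"
      using powr_mult_aux[OF x] by (intro mult_left_mono) auto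
    also have "\<dots> \<le> 4" using step by simp
    finally show ?case .
  qed
  show ?thesis
  proof (cases "j = 0")
    case True thus ?thesis using frac_coef_0[OF d01] by simp
  next
    case False
    hence "(real j + 1) powr s * \<bar>frac_coef d j\<bar> \<le> 4" using main by simp
    moreover have "(real j + 1) powr s > 0" by simp
    ultimately have "\<bar>frac_coef d j\<bar> \<le> 4 / (real j + 1) powr s" by (simp add: field_simps)
    moreover have "(real j + 1) powr (-(1+d1)) = inverse ((real j+1) powr (1+d1))" by (rule powr_minus)
    ultimately show ?thesis by (simp add: s_def divide_inverse)
  qed
qed

definition fac :: "complex list \<Rightarrow> complex poly" where
  "fac cs = prod_list (map (\<lambda>c. [:1, -c:]) cs)"

lemma fac_Cons: "fac (c # cs) = [:1, -c:] * fac cs" by (simp add: fac_def)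
lemma fac_Nil: "fac [] = 1" by (simp add: fac_def)

lemma factorize:
  fixes P :: "complex poly"
  assumes "poly P 0 = 1" "\<And>z. poly P z = 0 \<Longrightarrow> R \<le> norm z" "R > 0"
  shows "\<exists>cs. P = fac cs \<and> (\<forall>c\<in>set cs. norm c \<le> 1 / R) \<and> length cs = degree P"
  using assms
proof (induction "degree P" arbitrary: P)
  case 0
  then obtain a where "P = [:a:]" by (metis degree_eq_zeroE)
  with 0 have "P = 1" by (simp add: one_pCons)
  thus ?case using 0 by (intro exI[of _ "[]"]) (simp add: fac_Nil)
next
  case (Suc n P)
  hence "0 < degree P" by simp
  then obtain z where z: "poly P z = 0" using fundamental_theorem_of_algebra
    by (metis constant_degree less_not_refl)
  have z0: "z \<noteq> 0" using z Suc.prems(1) by auto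
  from z obtain Q where Q: "P = [:-z, 1:] * Q" using poly_eq_0_iff_dvd by (metis dvdE)
  define Q' where "Q' = smult (-z) Q"
  have PQ: "P = [:1, -1/z:] * Q'" unfolding Q Q'_def using z0
    by (simp add: field_simps)
  have Q0: "Q \<noteq> 0" using Q Suc.prems(1) by auto
  have "degree P = degree [:-z,1:] + degree Q" unfolding Q using Q0 by (intro degree_mult_eq) auto
  hence dQ: "degree P = Suc (degree Q')" using z0 unfolding Q'_def by simp
  have Q'0: "poly Q' 0 = 1" using Suc.prems(1) PQ by simp
  have Q'r: "R \<le> norm w" if "poly Q' w = 0" for w
    using Suc.prems(2)[of w] that PQ by simp
  from Suc.hyps(1)[of Q'] dQ Suc.hyps(2) Q'0 Q'r Suc.prems(3)
  obtain cs where cs: "Q' = fac cs" "\<forall>c\<in>set cs. norm c \<le> 1 / R" "length cs = degree Q'"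
    by auto
  have "norm (1 / z) = 1 / norm z" by (simp add: norm_divide)
  also have "\<dots> \<le> 1 / R" using Suc.prems(2)[OF z] Suc.prems(3) z0 by (intro divide_left_mono) auto
  finally have "norm (1 / z) \<le> 1 / R" .
  hence "\<forall>c\<in>set ((1/z)#cs). norm c \<le> 1/R" using cs(2) by simp
  moreover have "P = fac ((1/z) # cs)" using PQ cs(1) by (simp add: fac_Cons)
  moreover have "length ((1/z)#cs) = degree P" using cs(3) dQ by simp
  ultimately show ?case by blast
qed

lemma geom_inverse:
  "inverse (fps_of_poly [:1, -c:]) = Abs_fps (\<lambda>n. (c::complex) ^ n)"
proof (rule fps_inverse_unique, rule fps_ext)
  fix n
  have e: "fps_of_poly [:1, -c:] = 1 + fps_X * fps_const (-c)"
    by (simp add: fps_of_poly_pCons)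
  show "fps_nth (fps_of_poly [:1, - c:] * Abs_fps ((^) c)) n = fps_nth (1::complex fps) n"
    unfolding e distrib_right mult.assoc
    by (cases n) (simp_all add: fps_X_mult_nth)
qed

lemma inverse_fac_bound:
  assumes "\<forall>c\<in>set cs. norm c \<le> \<rho>" "0 \<le> \<rho>"
  shows "norm (fps_nth (inverse (fps_of_poly (fac cs))) n) \<le> (real n + 1) ^ length cs * \<rho> ^ n"
  using assms(1)
proof (induction cs arbitrary: n)
  case Nil
  thus ?case using assms(2) by (cases n) (simp_all add: fac_Nil)
next
  case (Cons c cs)
  define F where "F = inverse (fps_of_poly (fac cs))"
  have eq: "inverse (fps_of_poly (fac (c # cs))) = Abs_fps (\<lambda>n. c ^ n) * F"
    unfolding F_def fac_Cons fps_of_poly_mult fps_inverse_mult geom_inverse ..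
  have c: "norm c \<le> \<rho>" using Cons.prems by simp
  have "norm (fps_nth (inverse (fps_of_poly (fac (c # cs)))) n) = norm (\<Sum>i=0..n. c ^ i * fps_nth F (n - i))"
    unfolding eq fps_mult_nth by simp
  also have "\<dots> \<le> (\<Sum>i=0..n. norm (c ^ i * fps_nth F (n - i)))" by (rule norm_sum)
  also have "\<dots> \<le> (\<Sum>i=0..n. \<rho> ^ i * ((real (n - i) + 1) ^ length cs * \<rho> ^ (n - i)))"
  proof (rule sum_mono)
    fix i assume "i \<in> {0..n}"
    have "norm (c ^ i) \<le> \<rho> ^ i" using c by (simp add: norm_power power_mono)
    moreover have "norm (fps_nth F (n - i)) \<le> (real (n - i) + 1) ^ length cs * \<rho> ^ (n - i)"
      using Cons.IH Cons.prems unfolding F_def by simp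
    ultimately show "norm (c ^ i * fps_nth F (n - i)) \<le> \<rho> ^ i * ((real (n - i) + 1) ^ length cs * \<rho> ^ (n - i))"
      using assms(2) by (auto simp: norm_mult intro!: mult_mono)
  qed
  also have "\<dots> \<le> (\<Sum>i=0..n. (real n + 1) ^ length cs * \<rho> ^ n)"
  proof (rule sum_mono)
    fix i assume i: "i \<in> {0..n}"
    have "\<rho> ^ i * \<rho> ^ (n - i) = \<rho> ^ n" using i by (simp add: power_add[symmetric])
    moreover have "(real (n - i) + 1) ^ length cs \<le> (real n + 1) ^ length cs"
      using i by (intro power_mono) auto
    ultimately show "\<rho> ^ i * ((real (n - i) + 1) ^ length cs * \<rho> ^ (n - i)) \<le> (real n + 1) ^ length cs * \<rho> ^ n"
      using assms(2) by (metis mult.left_commute mult_right_mono zero_le_power)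
  qed
  also have "\<dots> = (real n + 1) ^ length (c # cs) * \<rho> ^ n" by simp
  finally show ?case .
qed

lemma fac_coeff_bound:
  assumes "\<forall>c\<in>set cs. norm c \<le> 1"
  shows "norm (coeff (fac cs) n) \<le> 2 ^ length cs"
  using assms
proof (induction cs arbitrary: n)
  case Nil thus ?case by (cases n) (simp_all add: fac_Nil)
next
  case (Cons c cs)
  have eq: "fac (c # cs) = fac cs + pCons 0 (smult (-c) (fac cs))"
    by (simp add: fac_Cons mult_pCons_left)
  have c: "norm c \<le> 1" using Cons.prems by simp
  have ih: "\<And>m. norm (coeff (fac cs) m) \<le> 2 ^ length cs" using Cons by simp
  show ?case
  proof (cases n)
    case 0
    have "norm (coeff (fac (c#cs)) n) \<le> 2 ^ length cs" using ih[of 0] by (simp add: eq 0)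
    also have "(2::real) ^ length cs \<le> 2 ^ length (c#cs)" by simp
    finally show ?thesis .
  next
    case (Suc m)
    have "norm (coeff (fac (c # cs)) n) = norm (coeff (fac cs) n - c * coeff (fac cs) m)"
      by (simp add: eq Suc)
    also have "\<dots> \<le> norm (coeff (fac cs) n) + norm c * norm (coeff (fac cs) m)"
      by (metis norm_mult norm_triangle_ineq4)
    also have "\<dots> \<le> 2 ^ length cs + 1 * 2 ^ length cs"
      using ih c by (intro add_mono mult_mono) auto
    finally show ?thesis by simp
  qed
qed


lemma conv_bound:
  fixes f g :: "real fps"
  assumes f: "\<And>k. \<bar>fps_nth f k\<bar> \<le> G k" and G: "\<And>k. 0 \<le> G k"
    and sG: "summable (\<lambda>k. G k * (real k + 1)^2)"
    and g: "\<And>n. \<bar>fps_nth g n\<bar> \<le> H * (real n + 1) powr (-s)" and s: "0 \<le> s" "s \<le> 2"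
  shows "\<bar>fps_nth (f*g) n\<bar> \<le> (\<Sum>k. G k * (real k + 1)^2) * H * (real n + 1) powr (-s)"
proof -
  have H: "0 \<le> H" using g[of 0] by simp
  have key: "(real (n-i) + 1) powr (-s) \<le> (real i + 1)^2 * (real n + 1) powr (-s)" if "i \<le> n" for i
  proof -
    have e: "(real i + 1) * (real (n-i) + 1) = real n + 1 + real i * real (n - i)"
      using that by (simp add: of_nat_diff algebra_simps)
    have "0 \<le> real i * real (n - i)" by simp
    hence "real n + 1 \<le> (real i + 1) * (real (n-i) + 1)" using e by linarith
    hence "(real n + 1) powr s \<le> ((real i + 1) * (real (n-i) + 1)) powr s"
      using s by (intro powr_mono2) auto
    also have "\<dots> = (real i + 1) powr s * (real (n-i)+1) powr s" by (simp add: powr_mult)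
    also have "\<dots> \<le> (real i + 1) powr 2 * (real (n-i)+1) powr s"
      using s by (intro mult_right_mono powr_mono) auto
    also have "(real i + 1) powr 2 = (real i + 1)^2" by (simp add: powr_realpow)
    finally have A: "(real n + 1) powr s \<le> (real i + 1)^2 * (real (n-i)+1) powr s" .
    have p1: "(real n + 1) powr s > 0" "(real (n-i)+1) powr s > 0" by auto
    show ?thesis using A p1 by (simp add: powr_minus divide_simps mult.commute)
  qed
  have "\<bar>fps_nth (f*g) n\<bar> = \<bar>\<Sum>i=0..n. fps_nth f i * fps_nth g (n - i)\<bar>" by (simp add: fps_mult_nth)
  also have "\<dots> \<le> (\<Sum>i=0..n. \<bar>fps_nth f i * fps_nth g (n - i)\<bar>)" by (rule sum_abs)
  also have "\<dots> \<le> (\<Sum>i=0..n. G i * (H * ((real i + 1)^2 * (real n + 1) powr (-s))))"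
  proof (rule sum_mono)
    fix i assume i: "i \<in> {0..n}"
    have "\<bar>fps_nth g (n - i)\<bar> \<le> H * ((real i + 1)^2 * (real n + 1) powr (-s))"
      using g[of "n-i"] key[of i] i H by (meson atLeastAtMost_iff mult_left_mono order_trans)
    thus "\<bar>fps_nth f i * fps_nth g (n - i)\<bar> \<le> G i * (H * ((real i + 1)^2 * (real n + 1) powr (-s)))"
      using f[of i] G[of i] by (simp add: abs_mult mult_mono)
  qed
  also have "\<dots> = (\<Sum>i=0..n. G i * (real i + 1)^2) * H * (real n + 1) powr (-s)"
    by (simp add: sum_distrib_right sum_distrib_left mult.commute mult.left_commute)
  also have "\<dots> \<le> (\<Sum>k. G k * (real k + 1)^2) * H * (real n + 1) powr (-s)"
    using H G by (intro mult_right_mono sum_le_suminf[OF sG]) auto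
  finally show ?thesis .
qed

lemma summable_poly_geom:
  fixes \<rho> :: real
  assumes "0 \<le> \<rho>" "\<rho> < 1"
  shows "summable (\<lambda>k. (real k + 1)^m * \<rho>^k)"
proof (cases "\<rho> = 0")
  case True
  thus ?thesis by (intro summable_finite[of "{0}"]) auto
next
  case False
  hence r: "0 < \<rho>" using assms by simp
  define c where "c = (1 + \<rho>) / 2"
  have c: "c < 1" "\<rho> < c" using assms by (auto simp: c_def)
  have "(\<lambda>k. (1 + inverse (real (Suc k)))^m) \<longlonglongrightarrow> (1 + 0)^m"
    by (intro tendsto_intros LIMSEQ_inverse_real_of_nat)
  hence "(\<lambda>k. (1 + inverse (real (Suc k)))^m) \<longlonglongrightarrow> 1" by simp
  moreover have "1 < c / \<rho>" using c r by (simp add: field_simps)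
  ultimately have "eventually (\<lambda>k. (1 + inverse (real (Suc k)))^m < c / \<rho>) sequentially"
    by (rule order_tendstoD(2))
  then obtain N where N: "\<And>k. k \<ge> N \<Longrightarrow> (1 + inverse (real (Suc k)))^m < c / \<rho>"
    by (auto simp: eventually_sequentially)
  show ?thesis
  proof (rule summable_ratio_test[OF c(1), of N])
    fix n assume n: "N \<le> n"
    have e: "real (Suc n) + 1 = (real n + 1) * (1 + inverse (real (Suc n)))"
      by (simp add: field_simps)
    have "norm ((real (Suc n) + 1)^m * \<rho>^Suc n) = ((1 + inverse (real (Suc n)))^m * \<rho>) * ((real n + 1)^m * \<rho>^n)"
    proof -
      have "(real (Suc n)+1)^m = (real n + 1)^m * (1 + inverse (real (Suc n)))^m"
        by (subst e) (simp only: power_mult_distrib)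
      thus ?thesis using r by (simp add: algebra_simps)
    qed
    also have "\<dots> \<le> c * ((real n + 1)^m * \<rho>^n)"
    proof (rule mult_right_mono)
      show "(1 + inverse (real (Suc n)))^m * \<rho> \<le> c" using N[OF n] r by (simp add: field_simps)
    qed (use r in simp)
    also have "\<dots> = c * norm ((real n + 1)^m * \<rho>^n)" using r by simp
    finally show "norm ((real (Suc n) + 1)^m * \<rho>^Suc n) \<le> c * norm ((real n + 1)^m * \<rho>^n)" .
  qed
qed


definition cf :: "real fps \<Rightarrow> complex fps" where
  "cf f = Abs_fps (\<lambda>n. complex_of_real (fps_nth f n))"

lemma cf_nth [simp]: "fps_nth (cf f) n = complex_of_real (fps_nth f n)"
  by (simp add: cf_def)

lemma cf_mult: "cf (f * g) = cf f * cf g"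
  by (rule fps_ext) (simp add: fps_mult_nth)

lemma cf_one: "cf 1 = 1"
  by (rule fps_ext) simp

lemma cf_inverse:
  assumes "fps_nth f 0 \<noteq> 0"
  shows "cf (inverse f) = inverse (cf f)"
proof -
  have "cf f * cf (inverse f) = 1"
    using inverse_mult_eq_1'[OF assms] by (simp add: cf_mult[symmetric] cf_one)
  thus ?thesis by (rule fps_inverse_unique[symmetric])
qed

definition Pb :: "nat \<Rightarrow> nat \<Rightarrow> real list \<Rightarrow> complex poly" where
  "Pb p q th = 1 - (\<Sum>j=1..q. monom (complex_of_real (th ! (p + j - 1))) j)"

definition Pa :: "nat \<Rightarrow> real list \<Rightarrow> complex poly" where
  "Pa p th = 1 - (\<Sum>i=1..p. monom (complex_of_real (th ! (i - 1))) i)"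

lemma poly_Pb: "poly (Pb p q th) z = b_theta p q th z"
  by (simp add: Pb_def b_theta_def poly_sum poly_monom)

lemma poly_Pa: "poly (Pa p th) z = a_theta p th z"
  by (simp add: Pa_def a_theta_def poly_sum poly_monom)

lemma degree_Pb: "degree (Pb p q th) \<le> q"
  unfolding Pb_def
  by (intro degree_diff_le degree_sum_le) (auto intro: order_trans[OF degree_monom_le])

lemma degree_Pa: "degree (Pa p th) \<le> p"
  unfolding Pa_def
  by (intro degree_diff_le degree_sum_le) (auto intro: order_trans[OF degree_monom_le])

lemma sum_delta_aux: "(\<Sum>j=1..(q::nat). (if n = j then f j else (0::complex))) = (if 1 \<le> n \<and> n \<le> q then f n else 0)"
  by (auto simp: sum.delta')

lemma coeff_Pb: "coeff (Pb p q th) n = complex_of_real (fps_nth (b_theta_fps p q th) n)"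
  unfolding Pb_def b_theta_fps_def
  by (simp add: coeff_sum coeff_monom sum_delta_aux coeff_1)

lemma coeff_Pa: "coeff (Pa p th) n = complex_of_real (fps_nth (a_theta_fps p th) n)"
  unfolding Pa_def a_theta_fps_def
  by (simp add: coeff_sum coeff_monom sum_delta_aux coeff_1)

lemma cf_b: "cf (b_theta_fps p q th) = fps_of_poly (Pb p q th)"
  by (rule fps_ext) (simp add: coeff_Pb)

lemma inv_b_bound:
  assumes th: "th \<in> Theta_star p q \<kappa>" and k: "\<kappa> > 0"
  shows "\<bar>fps_nth (inverse (b_theta_fps p q th)) n\<bar> \<le> (real n + 1) ^ q * (1 / (1 + \<kappa>)) ^ n"
proof -
  have r: "\<And>z. poly (Pb p q th) z = 0 \<Longrightarrow> 1 + \<kappa> \<le> norm z"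
    using th by (simp add: Theta_star_def poly_Pb)
  have z0: "poly (Pb p q th) 0 = 1" by (simp add: poly_Pb b_theta_def)
  obtain cs where cs: "Pb p q th = fac cs" "\<forall>c\<in>set cs. norm c \<le> 1 / (1 + \<kappa>)"
      "length cs = degree (Pb p q th)"
    using factorize[OF z0 r] k by force
  have b0: "fps_nth (b_theta_fps p q th) 0 \<noteq> 0" by (simp add: b_theta_fps_def)
  have "\<bar>fps_nth (inverse (b_theta_fps p q th)) n\<bar>
      = norm (fps_nth (cf (inverse (b_theta_fps p q th))) n)" by simp
  also have "\<dots> = norm (fps_nth (inverse (fps_of_poly (fac cs))) n)"
    unfolding cf_inverse[OF b0] cf_b cs(1) ..
  also have "\<dots> \<le> (real n + 1) ^ length cs * (1 / (1 + \<kappa>)) ^ n"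
    using cs(2) k by (intro inverse_fac_bound) auto
  also have "\<dots> \<le> (real n + 1) ^ q * (1 / (1 + \<kappa>)) ^ n"
    using cs(3) degree_Pb[of p q th] k by (intro mult_right_mono power_increasing) auto
  finally show ?thesis .
qed

lemma a_bound:
  assumes th: "th \<in> Theta_star p q \<kappa>" and k: "\<kappa> > 0"
  shows "\<bar>fps_nth (a_theta_fps p th) n\<bar> \<le> (if n \<le> p then 2 ^ p else 0)"
proof (cases "n \<le> p")
  case False thus ?thesis by (simp add: a_theta_fps_def)
next
  case True
  have r: "\<And>z. poly (Pa p th) z = 0 \<Longrightarrow> 1 + \<kappa> \<le> norm z"
    using th by (simp add: Theta_star_def poly_Pa)
  have z0: "poly (Pa p th) 0 = 1" by (simp add: poly_Pa a_theta_def)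
  obtain cs where cs: "Pa p th = fac cs" "\<forall>c\<in>set cs. norm c \<le> 1 / (1 + \<kappa>)"
      "length cs = degree (Pa p th)"
    using factorize[OF z0 r] k by force
  have cs1: "\<forall>c\<in>set cs. norm c \<le> 1"
  proof
    fix c assume "c \<in> set cs"
    hence "norm c \<le> 1 / (1 + \<kappa>)" using cs(2) by auto
    also have "\<dots> \<le> 1" using k by simp
    finally show "norm c \<le> 1" .
  qed
  have "\<bar>fps_nth (a_theta_fps p th) n\<bar> = norm (coeff (Pa p th) n)" by (simp add: coeff_Pa)
  also have "\<dots> \<le> 2 ^ length cs" unfolding cs(1) by (rule fac_coeff_bound[OF cs1])
  also have "\<dots> \<le> 2 ^ p" using cs(3) degree_Pa[of p th] by (intro power_increasing) auto
  finally show ?thesis using True by simp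
qed


definition KA :: "nat \<Rightarrow> real" where
  "KA p = (\<Sum>k. (if k \<le> p then 2 ^ p else 0) * (real k + 1)^2)"

definition KB :: "nat \<Rightarrow> real \<Rightarrow> real" where
  "KB q \<kappa> = (\<Sum>k. ((real k + 1)^q * (1 / (1 + \<kappa>))^k) * (real k + 1)^2)"

lemma gamma_bound:
  assumes th: "\<theta> \<in> Theta_kappa p q \<kappa> d1 d2" and k: "\<kappa> > 0" and d: "0 < d1" "d2 < 1/2"
  shows "\<bar>gamma_coef p q \<theta> n\<bar> \<le> KB q \<kappa> * (KA p * 4) * (real n + 1) powr (-(1+d1))"
proof -
  obtain ths d where t: "\<theta> = (ths, d)" "ths \<in> Theta_star p q \<kappa>" "d1 \<le> d" "d \<le> d2"
    using th by (cases \<theta>) (auto simp: Theta_kappa_def)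
  define B where "B = b_theta_fps p q ths"
  define A where "A = a_theta_fps p ths"
  define F where "F = frac_fps d"
  have s: "0 \<le> 1 + d1" "1 + d1 \<le> 2" using d t by auto
  have AF: "\<bar>fps_nth (A * F) m\<bar> \<le> KA p * 4 * (real m + 1) powr (-(1+d1))" for m
    unfolding KA_def
  proof (rule conv_bound)
    show "\<bar>fps_nth A k\<bar> \<le> (if k \<le> p then 2 ^ p else 0)" for k
      unfolding A_def by (rule a_bound[OF t(2) k])
    show "0 \<le> (if k \<le> p then (2::real) ^ p else 0)" for k by simp
    show "summable (\<lambda>k. (if k \<le> p then (2::real) ^ p else 0) * (real k + 1)^2)"
      by (rule summable_finite[of "{..p}"]) auto
    show "\<bar>fps_nth F n\<bar> \<le> 4 * (real n + 1) powr (-(1+d1))" for n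
      unfolding F_def frac_fps_def using frac_coef_bound[of d1 d n] t d by simp
  qed (use s in auto)
  have "gamma_coef p q \<theta> n = fps_nth (inverse B * (A * F)) n"
    by (simp add: gamma_coef_def t B_def A_def F_def mult.assoc)
  also have "\<bar>\<dots>\<bar> \<le> KB q \<kappa> * (KA p * 4) * (real n + 1) powr (-(1+d1))"
    unfolding KB_def
  proof (rule conv_bound)
    show "\<bar>fps_nth (inverse B) k\<bar> \<le> (real k + 1)^q * (1 / (1 + \<kappa>))^k" for k
      unfolding B_def by (rule inv_b_bound[OF t(2) k])
    show "0 \<le> (real k + 1)^q * (1 / (1 + \<kappa>))^k" for k using k by simp
    have "summable (\<lambda>k. (real k + 1)^(q+2) * (1 / (1 + \<kappa>))^k)"
      using k by (intro summable_poly_geom) auto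
    thus "summable (\<lambda>k. ((real k + 1)^q * (1 / (1 + \<kappa>))^k) * (real k + 1)^2)"
      by (rule summable_cong[THEN iffD1, rotated]) (simp add: power_add power2_eq_square)
    show "\<bar>fps_nth (A * F) n\<bar> \<le> KA p * 4 * (real n + 1) powr (-(1+d1))" for n by (rule AF)
  qed (use s in auto)
  finally show ?thesis .
qed


lemma tail_as:
  fixes M :: "'w measure" and X :: "int \<Rightarrow> 'w \<Rightarrow> real" and c :: "nat \<Rightarrow> real"
    and \<gamma> :: "'t \<Rightarrow> nat \<Rightarrow> real" and \<Theta> :: "'t set"
  assumes ps: "prob_space M" and Xm: "\<And>t. X t \<in> borel_measurable M"
    and Xb: "\<And>t. (\<integral>\<^sup>+\<omega>. ennreal \<bar>X t \<omega>\<bar> \<partial>M) \<le> ennreal B" and B0: "0 \<le> B"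
    and c0: "\<And>i. 0 \<le> c i" and cdec: "\<And>i. c (Suc i) \<le> c i" and cs: "summable c"
    and ne: "\<Theta> \<noteq> {}" and gb: "\<And>\<theta> i. \<theta> \<in> \<Theta> \<Longrightarrow> \<bar>\<gamma> \<theta> i\<bar> \<le> c i"
  shows "AE \<omega> in M. (\<lambda>t::nat. SUP \<theta>\<in>\<Theta>. ereal \<bar>(\<Sum>i. \<gamma> \<theta> i * X (int t - int i) \<omega>)
            - (\<Sum>i<t. \<gamma> \<theta> i * X (int t - int i) \<omega>)\<bar>) \<longlonglongrightarrow> 0"
proof -
  interpret prob_space M by (rule ps)
  define Z where "Z t \<omega> = (\<Sum>m. ennreal (c (m + t) * \<bar>X (- int m) \<omega>\<bar>))" for t \<omega>
  define T where "T t = (\<Sum>m. c (m + t))" for t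
  note Xm[measurable]
  have Zm: "Z t \<in> borel_measurable M" for t
    unfolding Z_def by (intro borel_measurable_suminf_order) measurable
  have cs': "summable (\<lambda>m. c (m + t))" for t using cs by (simp add: summable_iff_shift)
  have Zint: "(\<integral>\<^sup>+\<omega>. Z t \<omega> \<partial>M) \<le> ennreal (B * T t)" for t
  proof -
    have "(\<integral>\<^sup>+\<omega>. Z t \<omega> \<partial>M) = (\<Sum>m. \<integral>\<^sup>+\<omega>. ennreal (c (m + t) * \<bar>X (- int m) \<omega>\<bar>) \<partial>M)"
      unfolding Z_def by (intro nn_integral_suminf) measurable
    also have "\<dots> \<le> (\<Sum>m. ennreal (B * c (m + t)))"
    proof (intro suminf_le summableI)
      fix m
      have "(\<integral>\<^sup>+\<omega>. ennreal (c (m + t) * \<bar>X (- int m) \<omega>\<bar>) \<partial>M)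
          = (\<integral>\<^sup>+\<omega>. ennreal (c (m + t)) * ennreal \<bar>X (- int m) \<omega>\<bar> \<partial>M)"
        using c0 by (simp add: ennreal_mult)
      also have "\<dots> = ennreal (c (m + t)) * (\<integral>\<^sup>+\<omega>. ennreal \<bar>X (- int m) \<omega>\<bar> \<partial>M)"
        by (intro nn_integral_cmult) measurable
      also have "\<dots> \<le> ennreal (c (m + t)) * ennreal B"
        by (intro mult_left_mono Xb) auto
      also have "\<dots> = ennreal (B * c (m + t))" using c0 B0 by (simp add: ennreal_mult mult.commute)
      finally show "(\<integral>\<^sup>+\<omega>. ennreal (c (m + t) * \<bar>X (- int m) \<omega>\<bar>) \<partial>M) \<le> ennreal (B * c (m + t))" .
    qed
    also have "\<dots> = ennreal (\<Sum>m. B * c (m + t))"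
      using c0 B0 cs' by (intro suminf_ennreal2 summable_mult) auto
    also have "(\<Sum>m. B * c (m + t)) = B * T t" unfolding T_def using cs' by (rule suminf_mult)
    finally show ?thesis .
  qed
  have Tlim: "T \<longlonglongrightarrow> 0" unfolding T_def by (rule suminf_exist_split2[OF cs])
  have Zdec: "Z (Suc t) \<omega> \<le> Z t \<omega>" for t \<omega>
    unfolding Z_def
  proof (intro suminf_le summableI)
    fix m
    have "c (m + Suc t) \<le> c (m + t)" using cdec[of "m + t"] by simp
    thus "ennreal (c (m + Suc t) * \<bar>X (- int m) \<omega>\<bar>) \<le> ennreal (c (m + t) * \<bar>X (- int m) \<omega>\<bar>)"
      by (intro ennreal_leI mult_right_mono) auto
  qed
  have Zanti: "antimono (\<lambda>t. Z t \<omega>)" for \<omega>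
    by (rule antimonoI) (use Zdec in \<open>auto intro: lift_Suc_antimono_le[of "\<lambda>t. Z t \<omega>"]\<close>)
  define Zi where "Zi \<omega> = (INF t. Z t \<omega>)" for \<omega>
  have Zim: "Zi \<in> borel_measurable M" unfolding Zi_def using Zm by (intro borel_measurable_INF) auto
  have "(\<integral>\<^sup>+\<omega>. Zi \<omega> \<partial>M) \<le> ennreal (B * T t)" for t
  proof -
    have "(\<integral>\<^sup>+\<omega>. Zi \<omega> \<partial>M) \<le> (\<integral>\<^sup>+\<omega>. Z t \<omega> \<partial>M)"
      unfolding Zi_def by (intro nn_integral_mono INF_lower) auto
    thus ?thesis using Zint[of t] by simp
  qed
  moreover have "(\<lambda>t. ennreal (B * T t)) \<longlonglongrightarrow> ennreal (B * 0)"
    by (intro tendsto_ennrealI tendsto_intros Tlim)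
  ultimately have "(\<integral>\<^sup>+\<omega>. Zi \<omega> \<partial>M) \<le> ennreal (B * 0)"
    by (intro tendsto_lowerbound[of "\<lambda>t. ennreal (B * T t)"]) (auto intro: always_eventually)
  hence "(\<integral>\<^sup>+\<omega>. Zi \<omega> \<partial>M) = 0" by simp
  hence AE1: "AE \<omega> in M. Zi \<omega> = 0" using nn_integral_0_iff_AE[OF Zim] by simp
  have "(\<integral>\<^sup>+\<omega>. Z 0 \<omega> \<partial>M) \<noteq> \<infinity>" using Zint[of 0] by (auto simp: top_unique)
  hence AE2: "AE \<omega> in M. Z 0 \<omega> \<noteq> \<infinity>" by (rule nn_integral_noteq_infinite[OF Zm])
  show ?thesis using AE1 AE2
  proof eventually_elim
    case (elim \<omega>)
    have Zlim: "(\<lambda>t. Z t \<omega>) \<longlonglongrightarrow> 0"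
      using LIMSEQ_INF[OF Zanti[of \<omega>]] elim(1) by (simp add: Zi_def)
    have Zfin: "Z t \<omega> \<noteq> \<infinity>" for t
    proof -
      have "Z t \<omega> \<le> Z 0 \<omega>" using Zanti[of \<omega>] by (simp add: antimono_def)
      thus ?thesis using elim(2) by (auto simp: top_unique)
    qed
    define R where "R t = (\<Sum>m. c (m + t) * \<bar>X (- int m) \<omega>\<bar>)" for t
    have Rs: "summable (\<lambda>m. c (m + t) * \<bar>X (- int m) \<omega>\<bar>)" for t
      using Zfin[of t] c0 by (intro summable_suminf_not_top) (auto simp: Z_def)
    have ZR: "Z t \<omega> = ennreal (R t)" for t
      unfolding Z_def R_def using Rs c0 by (intro suminf_ennreal2) auto
    have R0: "0 \<le> R t" for t unfolding R_def using Rs c0 by (intro suminf_nonneg) auto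
    have Rlim: "R \<longlonglongrightarrow> 0"
    proof -
      have "(\<lambda>t. ennreal (R t)) \<longlonglongrightarrow> ennreal 0" using Zlim ZR by simp
      from tendsto_enn2real[OF this] show ?thesis using R0 by simp
    qed
    have bnd: "\<bar>(\<Sum>i. \<gamma> \<theta> i * X (int t - int i) \<omega>) - (\<Sum>i<t. \<gamma> \<theta> i * X (int t - int i) \<omega>)\<bar> \<le> R t"
      if th: "\<theta> \<in> \<Theta>" for \<theta> t
    proof -
      define f where "f i = \<gamma> \<theta> i * X (int t - int i) \<omega>" for i
      have fb: "norm (f i) \<le> c i * \<bar>X (int t - int i) \<omega>\<bar>" for i
        unfolding f_def using gb[OF th, of i] by (simp add: abs_mult mult_right_mono)
      have "summable (\<lambda>m. c (m + t) * \<bar>X (int t - int (m + t)) \<omega>\<bar>)" using Rs[of t] by simp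
      hence gs: "summable (\<lambda>i. c i * \<bar>X (int t - int i) \<omega>\<bar>)"
        by (subst summable_iff_shift[symmetric, of _ t])
      have fs: "summable f" by (rule summable_comparison_test'[OF gs fb])
      have "suminf f - sum f {..<t} = (\<Sum>m. f (m + t))"
        using suminf_split_initial_segment[OF fs, of t] by simp
      moreover have "\<bar>\<Sum>m. f (m + t)\<bar> \<le> R t"
      proof -
        have fb': "\<bar>f (m + t)\<bar> \<le> c (m + t) * \<bar>X (- int m) \<omega>\<bar>" for m using fb[of "m + t"] by simp
        have as: "summable (\<lambda>m. \<bar>f (m + t)\<bar>)"
          by (rule summable_comparison_test'[OF Rs[of t]]) (use fb' in simp)
        have "\<bar>\<Sum>m. f (m + t)\<bar> \<le> (\<Sum>m. \<bar>f (m + t)\<bar>)" by (rule summable_rabs[OF as])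
        also have "\<dots> \<le> R t" unfolding R_def by (rule suminf_le[OF fb' as Rs])
        finally show ?thesis .
      qed
      ultimately show ?thesis unfolding f_def by simp
    qed
    let ?S = "\<lambda>t::nat. SUP \<theta>\<in>\<Theta>. ereal \<bar>(\<Sum>i. \<gamma> \<theta> i * X (int t - int i) \<omega>)
            - (\<Sum>i<t. \<gamma> \<theta> i * X (int t - int i) \<omega>)\<bar>"
    obtain \<theta>0 where t0: "\<theta>0 \<in> \<Theta>" using ne by blast
    show "?S \<longlonglongrightarrow> 0"
    proof (rule tendsto_sandwich[of "\<lambda>_. 0" _ _ "\<lambda>t. ereal (R t)"])
      show "\<forall>\<^sub>F t in sequentially. 0 \<le> ?S t"
        using t0 by (intro always_eventually allI SUP_upper2[OF t0]) simp
      show "\<forall>\<^sub>F t in sequentially. ?S t \<le> ereal (R t)"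
        using bnd by (intro always_eventually allI SUP_least) simp
      show "(\<lambda>t. ereal (R t)) \<longlonglongrightarrow> 0" using Rlim by (simp add: zero_ereal_def tendsto_ereal)
    qed simp
  qed
qed
theorem proposition2:
  fixes M :: "'w measure" and X \<epsilon> :: "int \<Rightarrow> 'w \<Rightarrow> real"
    and p q :: nat and a b :: "nat \<Rightarrow> real" and d0 \<sigma>2 \<kappa> d1 d2 :: real
  assumes "prob_space M"
    \<comment> \<open>(epsilon_t): uncorrelated, mean 0, common variance sigma^2 > 0\<close>
    and eps_meas: "\<And>t. \<epsilon> t \<in> borel_measurable M"
    and eps_L2: "\<And>t. integrable M (\<lambda>\<omega>. (\<epsilon> t \<omega>)\<^sup>2)"
    and eps_mean: "\<And>t. prob_space.expectation M (\<epsilon> t) = 0"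
    and eps_var: "\<And>t. prob_space.expectation M (\<lambda>\<omega>. (\<epsilon> t \<omega>)\<^sup>2) = \<sigma>2"
    and sigma_pos: "\<sigma>2 > 0"
    and eps_uncorr: "\<And>s t. s \<noteq> t \<Longrightarrow> prob_space.expectation M (\<lambda>\<omega>. \<epsilon> s \<omega> * \<epsilon> t \<omega>) = 0"
    \<comment> \<open>d0 in (0,1/2)\<close>
    and d0: "0 < d0" "d0 < 1/2"
    \<comment> \<open>a(L), b(L): roots outside the closed unit disk, no common root\<close>
    and a_roots: "\<And>z::complex. norm z \<le> 1 \<Longrightarrow> 1 - (\<Sum>i=1..p. complex_of_real (a i) * z ^ i) \<noteq> 0"
    and b_roots: "\<And>z::complex. norm z \<le> 1 \<Longrightarrow> 1 - (\<Sum>i=1..q. complex_of_real (b i) * z ^ i) \<noteq> 0"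
    and no_common: "\<not> (\<exists>z::complex. 1 - (\<Sum>i=1..p. complex_of_real (a i) * z ^ i) = 0
                                  \<and> 1 - (\<Sum>i=1..q. complex_of_real (b i) * z ^ i) = 0)"
    \<comment> \<open>(X_t) second-order stationary\<close>
    and X_meas: "\<And>t. X t \<in> borel_measurable M"
    and X_L2: "\<And>t. integrable M (\<lambda>\<omega>. (X t \<omega>)\<^sup>2)"
    and X_mean: "\<And>t. prob_space.expectation M (X t) = prob_space.expectation M (X 0)"
    and X_cov: "\<And>t h. prob_space.expectation M (\<lambda>\<omega>. X (t + h) \<omega> * X t \<omega>)
                      = prob_space.expectation M (\<lambda>\<omega>. X h \<omega> * X 0 \<omega>)"
    \<comment> \<open>a(L)(1-L)^{d0} X_t = b(L) epsilon_t\<close>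
    and model: "\<And>t. AE \<omega> in M.
        (\<Sum>j. frac_coef d0 j * X (t - int j) \<omega>)
          - (\<Sum>i=1..p. a i * (\<Sum>j. frac_coef d0 j * X (t - int i - int j) \<omega>))
        = \<epsilon> t \<omega> - (\<Sum>i=1..q. b i * \<epsilon> (t - int i) \<omega>)"
    \<comment> \<open>Theta_kappa = Theta*_kappa x [d1,d2], with [d1,d2] in (0,1/2)\<close>
    and kappa: "\<kappa> > 0"
    and d12: "0 < d1" "d1 \<le> d2" "d2 < 1/2"
  shows "AE \<omega> in M.
     (\<lambda>t::nat. SUP \<theta>\<in>Theta_kappa p q \<kappa> d1 d2.
         ereal \<bar>eps_theta p q X (int t) \<theta> \<omega> - eps_tilde p q X t \<theta> \<omega>\<bar>) \<longlonglongrightarrow> 0"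
proof -
  interpret prob_space M by (rule assms(1))
  define E0 where "E0 = expectation (\<lambda>\<omega>. (X 0 \<omega>)\<^sup>2)"
  have abs_sq: "\<bar>x\<bar> \<le> x\<^sup>2 + 1" for x :: real
  proof (cases "\<bar>x\<bar> \<le> 1")
    case True thus ?thesis by (smt (verit) zero_le_power2)
  next
    case False
    hence "\<bar>x\<bar> * 1 \<le> \<bar>x\<bar> * \<bar>x\<bar>" by (intro mult_left_mono) auto
    thus ?thesis by (simp add: power2_eq_square abs_mult_self_eq)
  qed
  have Xb: "(\<integral>\<^sup>+\<omega>. ennreal \<bar>X t \<omega>\<bar> \<partial>M) \<le> ennreal (E0 + 1)" for t
  proof -
    have int: "integrable M (\<lambda>\<omega>. (X t \<omega>)\<^sup>2 + 1)" by (rule Bochner_Integration.integrable_add[OF X_L2[of t]]) (simp add: integrable_const)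
    have "(\<integral>\<^sup>+\<omega>. ennreal \<bar>X t \<omega>\<bar> \<partial>M) \<le> (\<integral>\<^sup>+\<omega>. ennreal ((X t \<omega>)\<^sup>2 + 1) \<partial>M)"
      by (intro nn_integral_mono ennreal_leI abs_sq)
    also have "\<dots> = ennreal (expectation (\<lambda>\<omega>. (X t \<omega>)\<^sup>2 + 1))"
      using int by (intro nn_integral_eq_integral) auto
    also have "expectation (\<lambda>\<omega>. (X t \<omega>)\<^sup>2 + 1) = expectation (\<lambda>\<omega>. (X t \<omega>)\<^sup>2) + 1"
      using X_L2[of t] by (simp add: prob_space)
    also have "expectation (\<lambda>\<omega>. (X t \<omega>)\<^sup>2) = E0"
      using X_cov[of t 0] unfolding E0_def by (simp add: power2_eq_square)
    finally show ?thesis .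
  qed
  have E0: "0 \<le> E0 + 1" unfolding E0_def by (smt (verit) integral_nonneg_AE AE_I2 zero_le_power2)
  define \<Theta> where "\<Theta> = Theta_kappa p q \<kappa> d1 d2"
  define C where "C = KB q \<kappa> * (KA p * 4)"
  define c where "c i = C * (real i + 1) powr (-(1+d1))" for i
  have gb: "\<bar>gamma_coef p q \<theta> i\<bar> \<le> c i" if "\<theta> \<in> \<Theta>" for \<theta> i
    unfolding c_def C_def using gamma_bound[of \<theta> p q \<kappa> d1 d2 i] that kappa d12 by (simp add: \<Theta>_def)
  define th0 where "th0 = ((replicate (p+q) 0 :: real list), d1)"
  have t0: "th0 \<in> \<Theta>"
  proof -
    have "a_theta p (replicate (p+q) 0) z = 1" for z
      unfolding a_theta_def by (auto intro!: sum.neutral)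
    moreover have "b_theta p q (replicate (p+q) 0) z = 1" for z
      unfolding b_theta_def by (auto intro!: sum.neutral)
    ultimately show ?thesis using d12 by (simp add: th0_def \<Theta>_def Theta_kappa_def Theta_star_def)
  qed
  have C0: "0 \<le> C"
  proof -
    have "0 \<le> c 0" using gb[OF t0, of 0] by linarith
    thus ?thesis by (simp add: c_def)
  qed
  have c0: "0 \<le> c i" for i using C0 by (simp add: c_def)
  have cdec: "c (Suc i) \<le> c i" for i
    unfolding c_def using C0 d12 by (intro mult_left_mono powr_mono2') auto
  have cs: "summable c"
  proof -
    have "summable (\<lambda>n. real n powr (-(1+d1)))" using d12 by (simp add: summable_real_powr_iff)
    hence "summable (\<lambda>n. real (n + 1) powr (-(1+d1)))" by (subst summable_iff_shift)
    hence "summable (\<lambda>n. (real n + 1) powr (-(1+d1)))" by (simp add: add.commute)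
    thus ?thesis unfolding c_def by (rule summable_mult)
  qed
  have "AE \<omega> in M. (\<lambda>t::nat. SUP \<theta>\<in>\<Theta>. ereal \<bar>(\<Sum>i. gamma_coef p q \<theta> i * X (int t - int i) \<omega>)
            - (\<Sum>i<t. gamma_coef p q \<theta> i * X (int t - int i) \<omega>)\<bar>) \<longlonglongrightarrow> 0"
    using t0 by (intro tail_as[OF assms(1) X_meas Xb E0 c0 cdec cs _ gb]) auto
  thus ?thesis unfolding \<Theta>_def eps_theta_def eps_tilde_def by simp
qed

end
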